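(* Let a Gibbs-type feature model with parameters $(\alpha,\theta)$ be given as a mixture: for $\alpha<0$, $V_{n,k}=\sum_{N\ge1}V^{\mathrm{BB}}_{n,k}(N)\,P_N(\{N\})$ for a probability distribution $P_N$ on $\mathbb N$; for $0\le\alpha<1$, $V_{n,k}=\int_0^\infty V^{\mathrm{IBP}}_{n,k}(\gamma)\,P_\gamma(d\gamma)$ for a probability distribution $P_\gamma$ on $(0,\infty)$. Let $N\sim P_N$ and $\gamma\sim P_\gamma$. Then, as $n\to\infty$: (i) if $\alpha<0$, $K_n\to N$ in distribution; (ii) if $\alpha=0$, $K_n/\log n\to\gamma\theta$ in distribution; (iii) if $0<\alpha<1$, $K_n/n^\alpha\to\gamma\,\Gamma(\theta+1)/\{\alpha\Gamma(\theta+\alpha)\}$ in distribution.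
   Context: Notation: $(x)_m=\Gamma(x+m)/\Gamma(x)$. A feature model on individuals $1,2,\dots$ with $K_n$ the number of distinct features displayed by the first $n$ individuals is a Gibbs-type feature model with parameters $\alpha<1$, $\theta>-\alpha$ if its exchangeable feature probability function (probability of any given ordered feature allocation of $[n]$ into $k$ nonempty sets of sizes $m_1,\dots,m_k$) is $\pi_n(m_1,\dots,m_k)=V_{n,k}\prod_{\ell=1}^k(1-\alpha)_{m_\ell-1}(\theta+\alpha)_{n-m_\ell}$, with consistent nonnegative weights $V_{n,k}$. Let $g_n(\theta,\alpha)=\sum_{i=1}^n\frac{(\theta+\alpha)_{i-1}}{(\theta+1)_{i-1}}$. Indian buffet process (IBP) weights, $\gamma>0$, $0\le\alpha<1$: $V^{\mathrm{IBP}}_{n,k}(\gamma)=\frac1{k!}\{\gamma/(\theta+1)_{n-1}\}^ke^{-\gamma g_n(\theta,\alpha)}$. Beta Bernoulli (BB) weights, $N\in\mathbb N$, $\alpha<0$: $V^{\mathrm{BB}}_{n,k}(N)=\binom Nk\{-\alpha/(\theta+\alpha)_n\}^k\{(\theta+\alpha)_n/(\theta)_n\}^N\mathbf 1\{0\le k\le N\}$. *)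

theory Defs
  imports "HOL-Probability.Probability"
begin

definition g_fun :: "real \<Rightarrow> real \<Rightarrow> nat \<Rightarrow> real" where
  "g_fun \<theta> \<alpha> n = (\<Sum>i=1..n. pochhammer (\<theta> + \<alpha>) (i - 1) / pochhammer (\<theta> + 1) (i - 1))"

definition V_IBP :: "real \<Rightarrow> real \<Rightarrow> nat \<Rightarrow> nat \<Rightarrow> real \<Rightarrow> real" where
  "V_IBP \<theta> \<alpha> n k \<gamma> =
     (1 / fact k) * (\<gamma> / pochhammer (\<theta> + 1) (n - 1)) ^ k * exp (- \<gamma> * g_fun \<theta> \<alpha> n)"

definition V_BB :: "real \<Rightarrow> real \<Rightarrow> nat \<Rightarrow> nat \<Rightarrow> nat \<Rightarrow> real" where
  "V_BB \<theta> \<alpha> n k N =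
     (if k \<le> N then real (N choose k) * (- \<alpha> / pochhammer (\<theta> + \<alpha>) n) ^ k
        * (pochhammer (\<theta> + \<alpha>) n / pochhammer \<theta> n) ^ N else 0)"

definition EFPF :: "(nat \<Rightarrow> nat \<Rightarrow> real) \<Rightarrow> real \<Rightarrow> real \<Rightarrow> nat \<Rightarrow> nat set list \<Rightarrow> real" where
  "EFPF V \<alpha> \<theta> n As = V n (length As) *
     prod_list (map (\<lambda>A. pochhammer (1 - \<alpha>) (card A - 1) * pochhammer (\<theta> + \<alpha>) (n - card A)) As)"

definition ord_feat_allocs :: "nat \<Rightarrow> nat \<Rightarrow> nat set list set" where
  "ord_feat_allocs n k = {As. length As = k \<and> set As \<subseteq> {A. A \<subseteq> {1..n} \<and> A \<noteq> {}}}"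

definition K_prob :: "(nat \<Rightarrow> nat \<Rightarrow> real) \<Rightarrow> real \<Rightarrow> real \<Rightarrow> nat \<Rightarrow> nat \<Rightarrow> real" where
  "K_prob V \<alpha> \<theta> n k = (\<Sum>As\<in>ord_feat_allocs n k. EFPF V \<alpha> \<theta> n As)"

definition K_scaled_law :: "(nat \<Rightarrow> nat \<Rightarrow> real) \<Rightarrow> real \<Rightarrow> real \<Rightarrow> nat \<Rightarrow> real \<Rightarrow> real measure" where
  "K_scaled_law V \<alpha> \<theta> n c =
     distr (density (count_space UNIV) (\<lambda>k::nat. ennreal (K_prob V \<alpha> \<theta> n k))) borel
       (\<lambda>k. real k / c)"

end

theory Submission
  imports Defs "HOL-Computational_Algebra.Formal_Power_Series" "HOL-Real_Asymp.Real_Asymp"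
begin

lemma sum_lists_prod:
  assumes "finite F"
  shows "(\<Sum>As\<in>{xs. set xs \<subseteq> F \<and> length xs = k}. prod_list (map w As)) = (sum w F :: real) ^ k"
proof (induction k)
  case 0
  have "{xs. set xs \<subseteq> F \<and> length xs = 0} = {[]}" by auto
  then show ?case by simp
next
  case (Suc k)
  have "(\<Sum>As\<in>{xs. set xs \<subseteq> F \<and> length xs = Suc k}. prod_list (map w As))
      = (\<Sum>p\<in>{xs. set xs \<subseteq> F \<and> length xs = k} \<times> F. prod_list (map w (snd p # fst p)))"
    unfolding lists_length_Suc_eq
    by (subst sum.reindex) (auto simp: inj_split_Cons case_prod_beta)
  also have "\<dots> = (\<Sum>xs\<in>{xs. set xs \<subseteq> F \<and> length xs = k}. \<Sum>a\<in>F. w a * prod_list (map w xs))"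
    by (subst sum.cartesian_product) (simp add: case_prod_beta)
  also have "\<dots> = (\<Sum>xs\<in>{xs. set xs \<subseteq> F \<and> length xs = k}. prod_list (map w xs)) * sum w F"
    by (simp add: sum_distrib_left sum_distrib_right mult.commute)
  finally show ?case using Suc by simp
qed

lemma sum_subsets_card:
  fixes f :: "nat \<Rightarrow> real"
  shows "(\<Sum>A\<in>{A. A \<subseteq> {1..n} \<and> A \<noteq> {}}. f (card A)) = (\<Sum>j=1..n. real (n choose j) * f j)"
proof -
  have fin: "finite {A. A \<subseteq> {1..n} \<and> A \<noteq> {}}" by simp
  have img: "card ` {A. A \<subseteq> {1..n} \<and> A \<noteq> {}} \<subseteq> {1..n}"
  proof
    fix j assume "j \<in> card ` {A. A \<subseteq> {1..n} \<and> A \<noteq> {}}"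
    then obtain A where A: "A \<subseteq> {1..n}" "A \<noteq> {}" "j = card A" by blast
    have fA: "finite A" using A(1) finite_subset by blast
    have "card A \<le> card {1..n}" using A(1) by (intro card_mono) auto
    moreover have "card A \<ge> 1" using fA A(2) by (simp add: Suc_le_eq card_gt_0_iff)
    ultimately show "j \<in> {1..n}" using A(3) by simp
  qed
  have "(\<Sum>A\<in>{A. A \<subseteq> {1..n} \<and> A \<noteq> {}}. f (card A))
     = (\<Sum>j\<in>{1..n}. \<Sum>A\<in>{A. A \<in> {A. A \<subseteq> {1..n} \<and> A \<noteq> {}} \<and> card A = j}. f (card A))"
    by (rule sum.group[symmetric, OF fin _ img]) simp
  also have "\<dots> = (\<Sum>j=1..n. real (n choose j) * f j)"
  proof (rule sum.cong[OF refl])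
    fix j assume j: "j \<in> {1..n}"
    have "{A. A \<in> {A. A \<subseteq> {1..n} \<and> A \<noteq> {}} \<and> card A = j} = {A. A \<subseteq> {1..n} \<and> card A = j}"
      using j by auto
    then show "(\<Sum>A\<in>{A. A \<in> {A. A \<subseteq> {1..n} \<and> A \<noteq> {}} \<and> card A = j}. f (card A)) = real (n choose j) * f j"
      using n_subsets[of "{1..n}" j] by simp
  qed
  finally show ?thesis .
qed

lemma poch_Vandermonde:
  fixes a b :: real
  shows "(\<Sum>j=0..n. real (n choose j) * pochhammer a j * pochhammer b (n - j)) = pochhammer (a + b) n"
proof -
  have "(\<Sum>j=0..n. ((-a) gchoose j) * ((-b) gchoose (n - j))) = (-a + -b) gchoose n"
    by (rule gbinomial_Vandermonde)
  hence "(\<Sum>j=0..n. (-1)^j * pochhammer a j / fact j * ((-1)^(n-j) * pochhammer b (n-j) / fact (n-j)))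
        = (-1)^n * pochhammer (a+b) n / fact n"
    by (simp add: gbinomial_pochhammer, simp add: add.commute)
  hence "fact n * (-1)^n * (\<Sum>j=0..n. (-1)^j * pochhammer a j / fact j * ((-1)^(n-j) * pochhammer b (n-j) / fact (n-j)))
        = fact n * (-1)^n * ((-1)^n * pochhammer (a+b) n / fact n)" by simp
  also have "\<dots> = pochhammer (a+b) n" by simp
  also have "fact n * (-1)^n * (\<Sum>j=0..n. (-1)^j * pochhammer a j / fact j * ((-1)^(n-j) * pochhammer b (n-j) / fact (n-j)))
      = (\<Sum>j=0..n. real (n choose j) * pochhammer a j * pochhammer b (n - j))"
    unfolding sum_distrib_left
  proof (rule sum.cong[OF refl])
    fix j assume j: "j \<in> {0..n}"
    have e: "(-1::real)^n * (-1)^j * (-1)^(n-j) = 1"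
      using j by (simp add: power_add[symmetric])
    have c: "real (n choose j) = fact n / (fact j * fact (n-j))"
      using j by (simp add: binomial_fact)
    show "fact n * (-1) ^ n * ((-1) ^ j * pochhammer a j / fact j * ((-1) ^ (n - j) * pochhammer b (n - j) / fact (n - j)))
       = real (n choose j) * pochhammer a j * pochhammer b (n - j)"
      unfolding c using e by (simp add: field_simps)
  qed
  finally show ?thesis .
qed

definition Ssum :: "real \<Rightarrow> real \<Rightarrow> nat \<Rightarrow> real" where
  "Ssum \<theta> \<alpha> n = (\<Sum>j=1..n. real (n choose j) * pochhammer (1 - \<alpha>) (j - 1) * pochhammer (\<theta> + \<alpha>) (n - j))"

lemma Ssum_ident: "- \<alpha> * Ssum \<theta> \<alpha> n = pochhammer \<theta> n - pochhammer (\<theta> + \<alpha>) n"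
proof -
  have V: "(\<Sum>j=0..n. real (n choose j) * pochhammer (-\<alpha>) j * pochhammer (\<theta> + \<alpha>) (n - j)) = pochhammer \<theta> n"
    using poch_Vandermonde[of n "-\<alpha>" "\<theta>+\<alpha>"] by simp
  have "(\<Sum>j=0..n. real (n choose j) * pochhammer (-\<alpha>) j * pochhammer (\<theta> + \<alpha>) (n - j))
     = pochhammer (\<theta> + \<alpha>) n + (\<Sum>j=Suc 0..n. real (n choose j) * pochhammer (-\<alpha>) j * pochhammer (\<theta> + \<alpha>) (n - j))"
    by (subst sum.atLeast_Suc_atMost) auto
  also have "(\<Sum>j=Suc 0..n. real (n choose j) * pochhammer (-\<alpha>) j * pochhammer (\<theta> + \<alpha>) (n - j))
     = - \<alpha> * Ssum \<theta> \<alpha> n"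
    unfolding Ssum_def sum_distrib_left
  proof (rule sum.cong)
    fix j assume "j \<in> {1..n}"
    then obtain i where i: "j = Suc i" by (cases j) auto
    show "real (n choose j) * pochhammer (-\<alpha>) j * pochhammer (\<theta> + \<alpha>) (n - j)
       = - \<alpha> * (real (n choose j) * pochhammer (1 - \<alpha>) (j - 1) * pochhammer (\<theta> + \<alpha>) (n - j))"
      unfolding i pochhammer_rec by (simp add: algebra_simps)
  qed simp
  finally show ?thesis using V by simp
qed

lemma g_fun_Suc: "g_fun \<theta> \<alpha> (Suc n) = g_fun \<theta> \<alpha> n + pochhammer (\<theta> + \<alpha>) n / pochhammer (\<theta> + 1) n"
  unfolding g_fun_def by simp

lemma g_ident:
  assumes "\<theta> + 1 > 0"
  shows "- \<alpha> * g_fun \<theta> \<alpha> (Suc m) * pochhammer (\<theta> + 1) m = pochhammer \<theta> (Suc m) - pochhammer (\<theta> + \<alpha>) (Suc m)"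
proof (induction m)
  case 0
  then show ?case by (simp add: g_fun_def)
next
  case (Suc m)
  have Q: "pochhammer (\<theta> + 1) m > 0" using assms by (rule pochhammer_pos)
  have e1: "pochhammer (\<theta> + 1) (Suc m) = pochhammer (\<theta> + 1) m * (\<theta> + 1 + m)" by (simp add: pochhammer_Suc)
  have e2: "pochhammer \<theta> (Suc (Suc m)) = pochhammer \<theta> (Suc m) * (\<theta> + 1 + m)" by (simp add: pochhammer_Suc)
  have e3: "pochhammer (\<theta>+\<alpha>) (Suc (Suc m)) = pochhammer (\<theta>+\<alpha>) (Suc m) * (\<theta> + \<alpha> + 1 + m)" by (simp add: pochhammer_Suc)
  have "- \<alpha> * g_fun \<theta> \<alpha> (Suc (Suc m)) * pochhammer (\<theta> + 1) (Suc m)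
     = (- \<alpha> * g_fun \<theta> \<alpha> (Suc m) * pochhammer (\<theta> + 1) m) * (\<theta> + 1 + m)
       - \<alpha> * pochhammer (\<theta> + \<alpha>) (Suc m)"
  proof -
    have pos: "\<theta> + 1 + m > 0" using assms by simp
    have D: "pochhammer (\<theta> + 1) (Suc m) \<noteq> 0" using pochhammer_pos[of "\<theta>+1" "Suc m"] assms by simp
    have "- \<alpha> * g_fun \<theta> \<alpha> (Suc (Suc m)) * pochhammer (\<theta> + 1) (Suc m)
      = - \<alpha> * g_fun \<theta> \<alpha> (Suc m) * pochhammer (\<theta> + 1) (Suc m) - \<alpha> * pochhammer (\<theta> + \<alpha>) (Suc m)"
      unfolding g_fun_Suc[of _ _ "Suc m"] using D by (simp add: field_simps)
    then show ?thesis unfolding e1 by (simp add: algebra_simps)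
  qed
  also have "\<dots> = pochhammer \<theta> (Suc (Suc m)) - pochhammer (\<theta> + \<alpha>) (Suc (Suc m))"
    unfolding Suc e2 e3 by (simp add: algebra_simps)
  finally show ?case .
qed

lemma continuous_on_pochhammer[continuous_intros]:
  fixes f :: "real \<Rightarrow> real"
  shows "continuous_on S f \<Longrightarrow> continuous_on S (\<lambda>x. pochhammer (f x) n)"
  unfolding pochhammer_prod by (intro continuous_intros)

lemma Ssum_g:
  assumes "\<theta> + 1 > 0"
  shows "Ssum \<theta> \<alpha> (Suc m) = g_fun \<theta> \<alpha> (Suc m) * pochhammer (\<theta> + 1) m"
proof -
  have nz: "Ssum \<theta> a (Suc m) = g_fun \<theta> a (Suc m) * pochhammer (\<theta> + 1) m" if "a \<noteq> 0" for a
  proof -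
    have "a * Ssum \<theta> a (Suc m) = a * (g_fun \<theta> a (Suc m) * pochhammer (\<theta> + 1) m)"
      using Ssum_ident[of a \<theta> "Suc m"] g_ident[OF assms, of a m] by linarith
    thus ?thesis using that by simp
  qed
  define h where "h a = Ssum \<theta> a (Suc m) - g_fun \<theta> a (Suc m) * pochhammer (\<theta> + 1) m" for a
  have ch: "continuous_on UNIV h"
    unfolding h_def Ssum_def g_fun_def divide_inverse
    by (intro continuous_intros)
  have "(h \<longlongrightarrow> h \<alpha>) (at \<alpha>)" using ch by (simp add: continuous_on_def)
  moreover have "(h \<longlongrightarrow> 0) (at \<alpha>)"
  proof (rule tendsto_eventually)
    have "eventually (\<lambda>a. a \<noteq> 0) (at \<alpha>)"
    proof (cases "\<alpha> = 0")
      case True thus ?thesis by (simp add: eventually_at_filter)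
    next
      case False thus ?thesis using t1_space_nhds[OF False] by (simp add: eventually_at_filter eventually_mono)
    qed
    thus "eventually (\<lambda>a. h a = 0) (at \<alpha>)" by eventually_elim (simp add: h_def nz)
  qed
  ultimately have "h \<alpha> = 0" using tendsto_unique by (metis trivial_limit_at)
  thus ?thesis by (simp add: h_def)
qed

lemma K_prob_eq: "K_prob V \<alpha> \<theta> n k = V n k * Ssum \<theta> \<alpha> n ^ k"
proof -
  define F where "F = {A. A \<subseteq> {1..n} \<and> A \<noteq> {}}"
  define w where "w A = pochhammer (1 - \<alpha>) (card A - 1) * pochhammer (\<theta> + \<alpha>) (n - card A)" for A :: "nat set"
  have o: "ord_feat_allocs n k = {xs. set xs \<subseteq> F \<and> length xs = k}"
    unfolding ord_feat_allocs_def F_def by auto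
  have "K_prob V \<alpha> \<theta> n k = V n k * (\<Sum>As\<in>{xs. set xs \<subseteq> F \<and> length xs = k}. prod_list (map w As))"
    unfolding K_prob_def EFPF_def o w_def sum_distrib_left by simp
  also have "\<dots> = V n k * (sum w F) ^ k"
    by (subst sum_lists_prod) (auto simp: F_def)
  also have "sum w F = Ssum \<theta> \<alpha> n"
    unfolding F_def w_def Ssum_def using sum_subsets_card[of "\<lambda>j. pochhammer (1 - \<alpha>) (j - 1) * pochhammer (\<theta> + \<alpha>) (n - j)" n]
    by (simp add: mult.assoc)
  finally show ?thesis .
qed

lemma finite_le_real: "finite {k::nat. real k \<le> y}"
proof (rule finite_subset)
  show "{k::nat. real k \<le> y} \<subseteq> {..nat \<lceil>y\<rceil>}"
  proof
    fix k assume "k \<in> {k::nat. real k \<le> y}"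
    hence "real k \<le> y" by simp
    hence "int k \<le> \<lceil>y\<rceil>" by linarith
    thus "k \<in> {..nat \<lceil>y\<rceil>}" by simp
  qed
qed simp

lemma cdf_K_scaled:
  assumes nn: "\<And>k. K_prob V \<alpha> \<theta> n k \<ge> 0" and c: "c > 0"
  shows "cdf (K_scaled_law V \<alpha> \<theta> n c) x = (\<Sum>k\<in>{k. real k \<le> x * c}. K_prob V \<alpha> \<theta> n k)"
proof -
  let ?M = "density (count_space UNIV) (\<lambda>k::nat. ennreal (K_prob V \<alpha> \<theta> n k))"
  have "cdf (K_scaled_law V \<alpha> \<theta> n c) x = measure ?M ((\<lambda>k. real k / c) -` {..x} \<inter> space ?M)"
    unfolding cdf_def K_scaled_law_def by (subst measure_distr) auto
  also have "(\<lambda>k. real k / c) -` {..x} \<inter> space ?M = {k. real k \<le> x * c}"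
    using c by (auto simp: field_simps)
  also have "measure ?M {k. real k \<le> x * c} = (\<Sum>k\<in>{k. real k \<le> x * c}. K_prob V \<alpha> \<theta> n k)"
  proof -
    have "emeasure ?M {k. real k \<le> x * c} = (\<integral>\<^sup>+k. ennreal (K_prob V \<alpha> \<theta> n k) \<partial>count_space {k. real k \<le> x * c})"
      by (subst emeasure_density) (auto simp: nn_integral_count_space_indicator)
    also have "\<dots> = ennreal (\<Sum>k\<in>{k. real k \<le> x * c}. K_prob V \<alpha> \<theta> n k)"
      using nn by (subst nn_integral_count_space_finite[OF finite_le_real]) auto
    finally show ?thesis unfolding measure_def using nn by (simp add: sum_nonneg)
  qed
  finally show ?thesis .
qed

definition pois :: "real \<Rightarrow> nat \<Rightarrow> real" where
  "pois l k = l ^ k / fact k * exp (- l)"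

lemma pois_nonneg: "l \<ge> 0 \<Longrightarrow> pois l k \<ge> 0"
  by (simp add: pois_def)

lemma exp_sums: "(\<lambda>k. l ^ k / fact k) sums exp (l::real)"
  using exp_converges[of l] by (simp add: divide_inverse mult.commute scaleR_conv_of_real)

lemma pois_sums0: "(\<lambda>k. pois l k) sums 1"
proof -
  have "(\<lambda>k. l ^ k / fact k * exp (-l)) sums (exp l * exp (-l))"
    by (rule sums_mult2[OF exp_sums])
  thus ?thesis by (simp add: pois_def exp_minus)
qed

lemma pois_Suc: "real (Suc j) * pois l (Suc j) = l * pois l j"
proof -
  have d: "real (Suc j) \<noteq> 0" "(fact j::real) \<noteq> 0" by auto
  have "real (Suc j) * pois l (Suc j) = real (Suc j) * (l * l^j / (real (Suc j) * fact j) * exp (-l))"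
    unfolding pois_def fact_Suc by simp
  also have "\<dots> = l * pois l j" unfolding pois_def using d by (simp only: field_simps) simp
  finally show ?thesis .
qed

lemma pois_sums1: "(\<lambda>k. real k * pois l k) sums l"
proof -
  have "(\<lambda>j. l * (l ^ j / fact j * exp (-l))) sums (l * 1)"
    by (rule sums_mult[OF pois_sums0[unfolded pois_def]])
  moreover have "(\<lambda>j. real (Suc j) * pois l (Suc j)) = (\<lambda>j. l * (l ^ j / fact j * exp (-l)))"
    by (rule ext) (simp add: pois_Suc pois_def)
  ultimately have "(\<lambda>j. real (Suc j) * pois l (Suc j)) sums l" by simp
  from sums_Suc[OF this] show ?thesis by simp
qed

lemma pois_sums2: "(\<lambda>k. real k * (real k - 1) * pois l k) sums (l^2)"
proof -
  have "(\<lambda>j. l^2 * (l ^ j / fact j * exp (-l))) sums (l^2 * 1)"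
    by (rule sums_mult[OF pois_sums0[unfolded pois_def]])
  moreover have "(\<lambda>j. real (Suc (Suc j)) * (real (Suc (Suc j)) - 1) * pois l (Suc (Suc j))) = (\<lambda>j. l^2 * (l ^ j / fact j * exp (-l)))"
  proof (rule ext)
    fix j
    have "real (Suc (Suc j)) * (real (Suc (Suc j)) - 1) * pois l (Suc (Suc j))
       = real (Suc j) * (real (Suc (Suc j)) * pois l (Suc (Suc j)))" by (simp add: algebra_simps)
    also have "\<dots> = l * (real (Suc j) * pois l (Suc j))" using pois_Suc[of "Suc j" l] pois_Suc[of j l] by simp
    also have "\<dots> = l^2 * pois l j" by (simp only: pois_Suc) (simp add: power2_eq_square)
    finally show "real (Suc (Suc j)) * (real (Suc (Suc j)) - 1) * pois l (Suc (Suc j)) = l^2 * (l ^ j / fact j * exp (-l))"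
      by (simp add: pois_def)
  qed
  ultimately have "(\<lambda>j. real (Suc (Suc j)) * (real (Suc (Suc j)) - 1) * pois l (Suc (Suc j))) sums l^2" by simp
  from sums_Suc[OF sums_Suc[OF this]] show ?thesis by simp
qed

lemma pois_var: "(\<lambda>k. (real k - l)^2 * pois l k) sums l"
proof -
  have e: "(\<lambda>k. (real k - l)^2 * pois l k) = (\<lambda>k. (real k * (real k - 1) * pois l k + (1 - 2*l) * (real k * pois l k)) + l^2 * pois l k)"
    by (rule ext) (simp add: algebra_simps power2_eq_square)
  have "(\<lambda>k. (real k * (real k - 1) * pois l k + (1 - 2*l) * (real k * pois l k)) + l^2 * pois l k) sums ((l^2 + (1 - 2*l) * l) + l^2 * 1)"
    by (intro sums_add sums_mult pois_sums0 pois_sums1 pois_sums2)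
  thus ?thesis unfolding e by (simp add: algebra_simps power2_eq_square)
qed

lemma pois_sum_le1:
  assumes "l \<ge> 0" "finite A"
  shows "(\<Sum>k\<in>A. pois l k) \<le> 1"
  using sum_le_suminf[OF sums_summable[OF pois_sums0] assms(2)] pois_nonneg[OF assms(1)] sums_unique[OF pois_sums0]
  by simp

lemma pois_lower_tail:
  assumes l: "l \<ge> 0" and a: "a < l"
  shows "(\<Sum>k\<in>{k. real k \<le> a}. pois l k) \<le> l / (l - a)^2"
proof -
  have fin: "finite {k. real k \<le> a}" 
    by (rule finite_subset[of _ "{..nat \<lceil>a\<rceil>}"]) (auto, linarith)
  have "(\<Sum>k\<in>{k. real k \<le> a}. pois l k) \<le> (\<Sum>k\<in>{k. real k \<le> a}. (real k - l)^2 / (l - a)^2 * pois l k)"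
  proof (rule sum_mono)
    fix k assume "k \<in> {k. real k \<le> a}"
    hence "(l - a)^2 \<le> (l - real k)^2" using a
      by (intro power_mono) auto
    hence "(l - a)^2 \<le> (real k - l)^2" by (simp add: power2_commute)
    hence "1 \<le> (real k - l)^2 / (l - a)^2" using a by simp
    thus "pois l k \<le> (real k - l)^2 / (l - a)^2 * pois l k"
      using pois_nonneg[OF l, of k] mult_right_mono[of 1 "(real k - l)^2 / (l - a)^2" "pois l k"] by simp
  qed
  also have "\<dots> = (\<Sum>k\<in>{k. real k \<le> a}. (real k - l)^2 * pois l k) / (l - a)^2"
    by (simp add: sum_divide_distrib)
  also have "\<dots> \<le> l / (l - a)^2"
    using sum_le_suminf[OF sums_summable[OF pois_var[of l]] fin] pois_nonneg[OF l] sums_unique[OF pois_var, of l]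
    by (intro divide_right_mono) auto
  finally show ?thesis .
qed

lemma pois_upper_tail:
  assumes l: "l \<ge> 0" and a: "l < a"
  shows "(\<Sum>k\<in>{k. real k \<le> a}. pois l k) \<ge> 1 - l / (a - l)^2"
proof -
  have fin: "finite {k. real k \<le> a}" 
    by (rule finite_subset[of _ "{..nat \<lceil>a\<rceil>}"]) (auto, linarith)
  define f where "f k = ((real k - l)^2 / (a - l)^2 - 1) * pois l k" for k
  have fs: "f sums (l / (a - l)^2 - 1)"
  proof -
    have "(\<lambda>k. (real k - l)^2 * pois l k / (a - l)^2 - pois l k) sums (l / (a - l)^2 - 1)"
      by (intro sums_diff sums_divide pois_var pois_sums0)
    thus ?thesis unfolding f_def by (simp add: algebra_simps diff_divide_distrib)
  qed
  have "(\<Sum>k\<in>{k. real k \<le> a}. f k) \<le> suminf f"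
  proof (rule sum_le_suminf[OF sums_summable[OF fs] fin])
    fix k assume "k \<in> - {k. real k \<le> a}"
    hence "(a - l)^2 \<le> (real k - l)^2" using a
      by (intro power_mono) auto
    hence "1 \<le> (real k - l)^2 / (a - l)^2" using a by simp
    thus "0 \<le> f k" unfolding f_def using pois_nonneg[OF l, of k] by simp
  qed
  hence "- (l / (a - l)^2 - 1) \<le> (\<Sum>k\<in>{k. real k \<le> a}. - f k)"
    using sums_unique[OF fs] by (simp add: sum_negf)
  also have "\<dots> \<le> (\<Sum>k\<in>{k. real k \<le> a}. pois l k)"
  proof (rule sum_mono)
    fix k
    have "0 \<le> (real k - l)^2 / (a - l)^2 * pois l k" using pois_nonneg[OF l, of k] by simp
    thus "- f k \<le> pois l k" unfolding f_def by (simp add: algebra_simps)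
  qed
  finally show ?thesis by simp
qed

lemma pois_conc_aux:
  fixes l c :: "nat \<Rightarrow> real"
  assumes c: "filterlim c at_top sequentially" and r: "(\<lambda>n. l n / c n) \<longlonglongrightarrow> \<mu>" and "x \<noteq> \<mu>"
  shows "(\<lambda>n. (l n / c n) / ((l n / c n - x)^2 * c n)) \<longlonglongrightarrow> 0"
proof -
  have "(\<lambda>n. (l n / c n) * inverse ((l n / c n - x)^2) * inverse (c n)) \<longlonglongrightarrow> \<mu> * inverse ((\<mu> - x)^2) * 0"
  proof -
    have a: "(\<lambda>n. inverse ((l n / c n - x)^2)) \<longlonglongrightarrow> inverse ((\<mu> - x)^2)"
      by (rule tendsto_inverse[OF tendsto_power[OF tendsto_diff[OF r tendsto_const]]]) (use assms(3) in auto)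
    have b: "(\<lambda>n. inverse (c n)) \<longlonglongrightarrow> 0" by (rule tendsto_inverse_0_at_top[OF c])
    show ?thesis by (rule tendsto_mult[OF tendsto_mult[OF r a] b])
  qed
  thus ?thesis by (simp add: field_simps)
qed

lemma pois_conc:
  fixes l c :: "nat \<Rightarrow> real"
  assumes l: "\<And>n. l n \<ge> 0" and c: "filterlim c at_top sequentially"
    and r: "(\<lambda>n. l n / c n) \<longlonglongrightarrow> \<mu>"
  shows "x < \<mu> \<Longrightarrow> (\<lambda>n. \<Sum>k\<in>{k. real k \<le> x * c n}. pois (l n) k) \<longlonglongrightarrow> 0"
    and "\<mu> < x \<Longrightarrow> (\<lambda>n. \<Sum>k\<in>{k. real k \<le> x * c n}. pois (l n) k) \<longlonglongrightarrow> 1"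
proof -
  have fin: "finite {k::nat. real k \<le> y}" for y
    by (rule finite_subset[of _ "{..nat \<lceil>y\<rceil>}"]) (auto, linarith)
  have cpos: "eventually (\<lambda>n. c n > 0) sequentially"
    using c by (simp add: filterlim_at_top_dense)
  {
    assume x: "x < \<mu>"
    have ev1: "eventually (\<lambda>n. l n / c n > x) sequentially"
      using r x by (simp add: order_tendsto_iff)
    show "(\<lambda>n. \<Sum>k\<in>{k. real k \<le> x * c n}. pois (l n) k) \<longlonglongrightarrow> 0"
    proof (rule tendsto_sandwich[OF _ _ tendsto_const pois_conc_aux[OF c r]])
      show "eventually (\<lambda>n. 0 \<le> (\<Sum>k\<in>{k. real k \<le> x * c n}. pois (l n) k)) sequentially"
        by (intro always_eventually allI sum_nonneg pois_nonneg l)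
      show "eventually (\<lambda>n. (\<Sum>k\<in>{k. real k \<le> x * c n}. pois (l n) k) \<le> (l n / c n) / ((l n / c n - x)^2 * c n)) sequentially"
        using ev1 cpos
      proof eventually_elim
        case (elim n)
        have lt: "x * c n < l n" using elim by (simp add: field_simps)
        have nz: "l n - x * c n \<noteq> 0" using lt by simp
        have "(l n / c n) / ((l n / c n - x)^2 * c n) = l n / (l n - x * c n)^2"
        proof -
          have e: "l n / c n - x = (l n - x * c n) / c n" using elim by (simp add: field_simps)
          show ?thesis unfolding e power_divide using elim nz by (simp add: field_simps power2_eq_square[of "c n"])
        qed
        thus ?case using pois_lower_tail[OF l lt] by linarith
      qed
    qed (use x in auto)
  }
  {
    assume x: "\<mu> < x"
    have ev1: "eventually (\<lambda>n. l n / c n < x) sequentially"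
      using r x by (simp add: order_tendsto_iff)
    have lim: "(\<lambda>n. 1 - (l n / c n) / ((l n / c n - x)^2 * c n)) \<longlonglongrightarrow> 1 - 0"
      by (intro tendsto_intros pois_conc_aux[OF c r]) (use x in auto)
    show "(\<lambda>n. \<Sum>k\<in>{k. real k \<le> x * c n}. pois (l n) k) \<longlonglongrightarrow> 1"
    proof (rule tendsto_sandwich[OF _ _ _ tendsto_const])
      show "(\<lambda>n. 1 - (l n / c n) / ((l n / c n - x)^2 * c n)) \<longlonglongrightarrow> 1" using lim by simp
      show "eventually (\<lambda>n. (\<Sum>k\<in>{k. real k \<le> x * c n}. pois (l n) k) \<le> 1) sequentially"
        by (intro always_eventually allI pois_sum_le1 l fin)
      show "eventually (\<lambda>n. 1 - (l n / c n) / ((l n / c n - x)^2 * c n) \<le> (\<Sum>k\<in>{k. real k \<le> x * c n}. pois (l n) k)) sequentially"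
        using ev1 cpos
      proof eventually_elim
        case (elim n)
        have lt: "l n < x * c n" using elim by (simp add: field_simps)
        have nz: "x * c n - l n \<noteq> 0" "l n - x * c n \<noteq> 0" using lt by simp_all
        have "(l n / c n) / ((l n / c n - x)^2 * c n) = l n / (x * c n - l n)^2"
        proof -
          have e: "l n / c n - x = (l n - x * c n) / c n" using elim by (simp add: field_simps)
          show ?thesis unfolding e power_divide using elim nz by (simp add: field_simps power2_eq_square[of "c n"] power2_commute)
        qed
        thus ?case using pois_upper_tail[OF l lt] by linarith
      qed
    qed
  }
qed

lemma g_fun_0 [simp]: "g_fun \<theta> \<alpha> 0 = 0" by (simp add: g_fun_def)

lemma g0_eq:
  assumes "\<theta> > 0"
  shows "g_fun \<theta> 0 n = \<theta> * (\<Sum>i<n. 1 / (\<theta> + real i))"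
proof (induction n)
  case 0 thus ?case by simp
next
  case (Suc n)
  have Q: "pochhammer (\<theta> + 1) n > 0" using assms by (intro pochhammer_pos) simp
  have "pochhammer \<theta> n * (\<theta> + n) = \<theta> * pochhammer (\<theta> + 1) n"
    using pochhammer_Suc[of \<theta> n] pochhammer_rec[of \<theta> n] by simp
  hence "pochhammer \<theta> n / pochhammer (\<theta> + 1) n = \<theta> / (\<theta> + n)"
    using Q assms by (simp add: field_simps)
  thus ?case using Suc by (simp add: g_fun_Suc algebra_simps)
qed

lemma H_lower:
  assumes "\<theta> > 0"
  shows "ln (\<theta> + real n) - ln \<theta> \<le> (\<Sum>i<n. 1 / (\<theta> + real i))"
proof (induction n)
  case 0 thus ?case by simp
next
  case (Suc n)
  have p: "\<theta> + real n > 0" using assms by simp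
  have "ln ((\<theta> + real (Suc n)) / (\<theta> + real n)) \<le> (\<theta> + real (Suc n)) / (\<theta> + real n) - 1"
    using p by (intro ln_le_minus_one) simp
  also have "\<dots> = 1 / (\<theta> + real n)" using p by (simp add: field_simps)
  finally have "ln (\<theta> + real (Suc n)) - ln (\<theta> + real n) \<le> 1 / (\<theta> + real n)"
    using p by (simp add: ln_div)
  thus ?case using Suc by simp
qed

lemma H_upper:
  assumes "\<theta> > 0"
  shows "(\<Sum>i<Suc n. 1 / (\<theta> + real i)) \<le> 1 / \<theta> + ln (\<theta> + real n) - ln \<theta>"
proof (induction n)
  case 0 thus ?case by simp
next
  case (Suc n)
  have p: "\<theta> + real n > 0" using assms by simp
  have "ln ((\<theta> + real n) / (\<theta> + real (Suc n))) \<le> (\<theta> + real n) / (\<theta> + real (Suc n)) - 1"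
    using p by (intro ln_le_minus_one) simp
  also have "\<dots> = - (1 / (\<theta> + real (Suc n)))" using p by (simp add: field_simps)
  finally have "1 / (\<theta> + real (Suc n)) \<le> ln (\<theta> + real (Suc n)) - ln (\<theta> + real n)"
    using p by (simp add: ln_div)
  thus ?case using Suc by simp
qed

lemma g0_asymp:
  assumes th: "\<theta> > 0"
  shows "(\<lambda>n. g_fun \<theta> 0 n / ln (real n)) \<longlonglongrightarrow> \<theta>"
proof -
  let ?H = "\<lambda>n. (\<Sum>i<n. 1 / (\<theta> + real i))"
  have "(\<lambda>n. ?H n / ln (real n)) \<longlonglongrightarrow> 1"
  proof (rule tendsto_sandwich)
    show "eventually (\<lambda>n. (ln (\<theta> + real n) - ln \<theta>) / ln (real n) \<le> ?H n / ln (real n)) sequentially"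
      using eventually_gt_at_top[of 1]
      by eventually_elim (intro divide_right_mono H_lower th, simp)
    show "eventually (\<lambda>n. ?H n / ln (real n) \<le> (1 / \<theta> + ln (\<theta> + (real n - 1)) - ln \<theta>) / ln (real n)) sequentially"
      using eventually_gt_at_top[of 1]
    proof eventually_elim
      case (elim n)
      then obtain m where m: "n = Suc m" by (cases n) auto
      have "?H n \<le> 1 / \<theta> + ln (\<theta> + (real n - 1)) - ln \<theta>" using H_upper[OF th, of m] m by simp
      thus ?case using elim by (intro divide_right_mono) simp_all
    qed
    show "(\<lambda>n. (ln (\<theta> + real n) - ln \<theta>) / ln (real n)) \<longlonglongrightarrow> 1"
      using th by real_asymp
    show "(\<lambda>n. (1 / \<theta> + ln (\<theta> + (real n - 1)) - ln \<theta>) / ln (real n)) \<longlonglongrightarrow> 1"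
      using th by real_asymp
  qed
  hence "(\<lambda>n. \<theta> * (?H n / ln (real n))) \<longlonglongrightarrow> \<theta> * 1" by (intro tendsto_mult tendsto_const)
  thus ?thesis by (simp add: g0_eq[OF th])
qed

lemma poch_ratio:
  fixes a b :: real
  assumes a: "a > 0" and b: "b > 0"
  shows "(\<lambda>m. pochhammer a (m+1) / pochhammer b (m+1) * real m powr (b - a)) \<longlonglongrightarrow> Gamma b / Gamma a"
proof -
  have ga: "Gamma a \<noteq> 0" using a by (simp add: Gamma_eq_zero_iff) (meson nonpos_Ints_nonpos not_le)
  have lim: "(\<lambda>m. Gamma_series b m / Gamma_series a m) \<longlonglongrightarrow> Gamma b / Gamma a"
    using ga by (intro tendsto_divide Gamma_series_LIMSEQ)
  have ev: "eventually (\<lambda>m. Gamma_series b m / Gamma_series a m = pochhammer a (m+1) / pochhammer b (m+1) * real m powr (b - a)) sequentially"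
    using eventually_gt_at_top[of 0]
  proof eventually_elim
    case (elim m)
    have pa: "pochhammer a (m+1) > 0" "pochhammer b (m+1) > 0" using a b by (simp_all add: pochhammer_pos)
    have "exp (b * ln (real m)) / exp (a * ln (real m)) = real m powr (b - a)"
      using elim by (simp add: powr_def exp_diff[symmetric] algebra_simps)
    hence "Gamma_series b m / Gamma_series a m = pochhammer a (m+1) / pochhammer b (m+1) * (exp (b * ln (real m)) / exp (a * ln (real m)))"
      unfolding Gamma_series_def using pa by (simp add: field_simps)
    thus ?case using \<open>_ = real m powr (b - a)\<close> by simp
  qed
  show ?thesis using Lim_transform_eventually[OF lim ev] .
qed

lemma g_pos_asymp:
  fixes \<alpha> \<theta> :: real
  assumes a0: "0 < \<alpha>" and a1: "\<alpha> < 1" and th: "\<theta> > - \<alpha>"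
  shows "(\<lambda>n. g_fun \<theta> \<alpha> n / real n powr \<alpha>) \<longlonglongrightarrow> Gamma (\<theta> + 1) / (\<alpha> * Gamma (\<theta> + \<alpha>))"
proof -
  have t1: "\<theta> + 1 > 0" and ta: "\<theta> + \<alpha> > 0" using a1 th by auto
  define r where "r m = pochhammer (\<theta> + \<alpha>) (m+1) / pochhammer (\<theta> + 1) (m+1) * real m powr ((\<theta>+1) - (\<theta>+\<alpha>))" for m
  have rl: "r \<longlonglongrightarrow> Gamma (\<theta> + 1) / Gamma (\<theta> + \<alpha>)" unfolding r_def by (rule poch_ratio[OF ta t1])
  have q: "(\<lambda>m. (\<theta> + 1 + real m) * real m powr (\<alpha> - 1) / real (Suc m) powr \<alpha>) \<longlonglongrightarrow> 1"
    using a0 a1 by real_asymp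
  have q2: "(\<lambda>m. \<theta> / real (Suc m) powr \<alpha>) \<longlonglongrightarrow> 0"
    using a0 by real_asymp
  have lim: "(\<lambda>m. (r m * ((\<theta> + 1 + real m) * real m powr (\<alpha> - 1) / real (Suc m) powr \<alpha>) - \<theta> / real (Suc m) powr \<alpha>) / \<alpha>)
     \<longlonglongrightarrow> (Gamma (\<theta> + 1) / Gamma (\<theta> + \<alpha>) * 1 - 0) / \<alpha>"
    by (intro tendsto_intros rl q q2) (use a0 in simp)
  have ev: "eventually (\<lambda>m. (r m * ((\<theta> + 1 + real m) * real m powr (\<alpha> - 1) / real (Suc m) powr \<alpha>) - \<theta> / real (Suc m) powr \<alpha>) / \<alpha>
      = g_fun \<theta> \<alpha> (Suc m) / real (Suc m) powr \<alpha>) sequentially"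
    using eventually_gt_at_top[of 0]
  proof eventually_elim
    case (elim m)
    have Q: "pochhammer (\<theta> + 1) m > 0" using t1 by (simp add: pochhammer_pos)
    have Q1: "pochhammer (\<theta> + 1) (m+1) = pochhammer (\<theta> + 1) m * (\<theta> + 1 + real m)"
      by (simp add: pochhammer_Suc)
    have pt: "pochhammer \<theta> (Suc m) = \<theta> * pochhammer (\<theta> + 1) m" by (simp add: pochhammer_rec)
    have gi: "g_fun \<theta> \<alpha> (Suc m) = (pochhammer (\<theta> + \<alpha>) (Suc m) / pochhammer (\<theta> + 1) m - \<theta>) / \<alpha>"
      using g_ident[OF t1, of \<alpha> m] Q a0 unfolding pt by (simp add: field_simps)
    have pw: "real m powr (1 - \<alpha>) * real m powr (\<alpha> - 1) = 1"
      using elim by (simp add: powr_add[symmetric])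
    have pos: "\<theta> + 1 + real m > 0" using t1 by simp
    have "r m * ((\<theta> + 1 + real m) * real m powr (\<alpha> - 1)) = pochhammer (\<theta> + \<alpha>) (Suc m) / pochhammer (\<theta> + 1) m"
    proof -
      have "r m * ((\<theta> + 1 + real m) * real m powr (\<alpha> - 1))
          = pochhammer (\<theta> + \<alpha>) (m+1) / pochhammer (\<theta> + 1) (m+1) * (\<theta> + 1 + real m) * (real m powr (1 - \<alpha>) * real m powr (\<alpha> - 1))"
        unfolding r_def by (simp add: algebra_simps add_divide_distrib)
      also have "\<dots> = pochhammer (\<theta> + \<alpha>) (Suc m) / pochhammer (\<theta> + 1) m"
      proof -
        have aux: "\<And>P Q c::real. c \<noteq> 0 \<Longrightarrow> P / (Q * c) * c * 1 = P / Q" by simp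
        show ?thesis unfolding pw Q1 using aux[of "\<theta> + 1 + real m"] pos by simp
      qed
      finally show ?thesis .
    qed
    then show ?case unfolding gi by (simp add: field_simps)
  qed
  have "(\<lambda>m. g_fun \<theta> \<alpha> (Suc m) / real (Suc m) powr \<alpha>) \<longlonglongrightarrow> Gamma (\<theta> + 1) / (\<alpha> * Gamma (\<theta> + \<alpha>))"
    using Lim_transform_eventually[OF lim ev] by (simp add: mult.commute)
  thus ?thesis by (rule LIMSEQ_imp_Suc)
qed

lemma bb_ratio:
  fixes \<alpha> \<theta> :: real
  assumes a0: "\<alpha> < 0" and th: "\<theta> > - \<alpha>"
  shows "(\<lambda>n. pochhammer (\<theta> + \<alpha>) n / pochhammer \<theta> n) \<longlonglongrightarrow> 0"
proof -
  have t: "\<theta> > 0" using a0 th by linarith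
  have ta: "\<theta> + \<alpha> > 0" using a0 th by linarith
  have rl: "(\<lambda>m. pochhammer (\<theta> + \<alpha>) (m+1) / pochhammer \<theta> (m+1) * real m powr (\<theta> - (\<theta>+\<alpha>))) \<longlonglongrightarrow> Gamma \<theta> / Gamma (\<theta> + \<alpha>)"
    by (rule poch_ratio[OF ta t])
  have q: "(\<lambda>m. real m powr \<alpha>) \<longlonglongrightarrow> 0" using a0 by real_asymp
  have lim: "(\<lambda>m. pochhammer (\<theta> + \<alpha>) (m+1) / pochhammer \<theta> (m+1) * real m powr (\<theta> - (\<theta>+\<alpha>)) * real m powr \<alpha>) \<longlonglongrightarrow> Gamma \<theta> / Gamma (\<theta> + \<alpha>) * 0"
    by (intro tendsto_mult rl q)
  have ev: "eventually (\<lambda>m. pochhammer (\<theta> + \<alpha>) (m+1) / pochhammer \<theta> (m+1) * real m powr (\<theta> - (\<theta>+\<alpha>)) * real m powr \<alpha>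
      = pochhammer (\<theta> + \<alpha>) (Suc m) / pochhammer \<theta> (Suc m)) sequentially"
    using eventually_gt_at_top[of 0]
  proof eventually_elim
    case (elim m)
    have "real m powr (\<theta> - (\<theta>+\<alpha>)) * real m powr \<alpha> = 1" using elim by (simp add: powr_add[symmetric])
    thus ?case by (simp add: mult.assoc)
  qed
  have "(\<lambda>m. pochhammer (\<theta> + \<alpha>) (Suc m) / pochhammer \<theta> (Suc m)) \<longlonglongrightarrow> 0"
    using Lim_transform_eventually[OF lim ev] by simp
  thus ?thesis by (rule LIMSEQ_imp_Suc)
qed

lemma ibp_weak:
  fixes P :: "real measure" and c b :: "nat \<Rightarrow> real" and L :: real
  assumes ps: "prob_space P" and sP: "sets P = sets borel" and pos: "emeasure P {0<..} = 1"
   and L: "L > 0" and c: "filterlim c at_top sequentially" and bpos: "\<And>n. b n \<ge> 0"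
   and r: "(\<lambda>n. b n / c n) \<longlonglongrightarrow> L"
   and K: "\<And>n k. n \<ge> 1 \<Longrightarrow> K_prob V \<alpha> \<theta> n k = (\<integral>\<gamma>. pois (\<gamma> * b n) k \<partial>P)"
  shows "weak_conv_m (\<lambda>n. K_scaled_law V \<alpha> \<theta> n (c n)) (distr P borel (\<lambda>\<gamma>. \<gamma> * L))"
proof -
  interpret prob_space P by (rule ps)
  have spP: "space P = UNIV" using sets_eq_imp_space_eq[OF sP] by simp
  have mP: "measurable P = measurable borel" by (intro ext measurable_cong_sets sP refl)
  have AEpos: "AE \<gamma> in P. \<gamma> > 0"
  proof -
    have "prob {0<..} = 1" using pos by (simp add: emeasure_eq_measure)
    hence "AE \<gamma> in P. \<gamma> \<in> {0<..}" using prob_eq_1[of "{0<..}"] sP by simp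
    thus ?thesis by simp
  qed
  have fin: "finite {k::nat. real k \<le> y}" for y
    by (rule finite_subset[of _ "{..nat \<lceil>y\<rceil>}"]) (auto, linarith)
  have meas_pois: "(\<lambda>\<gamma>. pois (\<gamma> * b n) k) \<in> borel_measurable P" for n k
    unfolding mP pois_def by measurable
  have int_pois: "integrable P (\<lambda>\<gamma>. pois (\<gamma> * b n) k)" for n k
  proof (rule integrable_const_bound[where B=1])
    show "AE \<gamma> in P. norm (pois (\<gamma> * b n) k) \<le> 1"
      using AEpos
    proof eventually_elim
      case (elim \<gamma>)
      have nn: "\<gamma> * b n \<ge> 0" using elim bpos[of n] by simp
      show ?case using pois_sum_le1[OF nn, of "{k}"] pois_nonneg[OF nn, of k] by simp
    qed
  qed (rule meas_pois)
  have Knn: "K_prob V \<alpha> \<theta> n k \<ge> 0" if "n \<ge> 1" for n k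
    unfolding K[OF that]
    by (rule integral_nonneg_AE) (use AEpos in eventually_elim, use bpos[of n] in \<open>auto intro!: pois_nonneg\<close>)
  define T where "T = distr P borel (\<lambda>\<gamma>. \<gamma> * L)"
  have rdT: "real_distribution T" unfolding T_def
    by (rule real_distribution_distr) (simp add: mP)
  show ?thesis
    unfolding weak_conv_m_def weak_conv_def T_def[symmetric]
  proof (intro allI impI)
    fix x assume cont: "isCont (cdf T) x"
    have "measure T {x} = 0" using cont finite_borel_measure.isCont_cdf[OF real_distribution.finite_borel_measure_M[OF rdT]] by simp
    hence m0: "measure P {\<gamma>. \<gamma> * L = x} = 0"
      unfolding T_def by (subst (asm) measure_distr) (auto simp: mP spP vimage_def)
    have AEne: "AE \<gamma> in P. \<gamma> * L \<noteq> x"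
    proof (subst AE_iff_measurable[of "{\<gamma>. \<gamma> * L = x}"])
      show "{\<gamma>. \<gamma> * L = x} \<in> sets P" using sP by simp
      show "{\<gamma> \<in> space P. \<not> \<gamma> * L \<noteq> x} = {\<gamma>. \<gamma> * L = x}" using spP by simp
      show "emeasure P {\<gamma>. \<gamma> * L = x} = 0" using m0 by (simp add: emeasure_eq_measure)
    qed
    define s where "s n \<gamma> = (\<Sum>k\<in>{k. real k \<le> x * c n}. pois (\<gamma> * b n) k)" for n \<gamma>
    define f :: "real \<Rightarrow> real" where "f = indicator {\<gamma>. \<gamma> * L \<le> x}"
    have cdfT: "cdf T x = integral\<^sup>L P f"
      unfolding T_def cdf_def f_def by (subst measure_distr) (auto simp: mP spP vimage_def)
    have lim: "(\<lambda>n. integral\<^sup>L P (s n)) \<longlonglongrightarrow> integral\<^sup>L P f"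
    proof (rule integral_dominated_convergence[where w="\<lambda>_. 1"])
      show "f \<in> borel_measurable P" unfolding f_def mP by measurable
      show "s n \<in> borel_measurable P" for n unfolding s_def using meas_pois by measurable
      show "integrable P (\<lambda>_. 1::real)" by simp
      show "AE \<gamma> in P. norm (s n \<gamma>) \<le> 1" for n
        using AEpos
      proof eventually_elim
        case (elim \<gamma>)
        have nn: "\<gamma> * b n \<ge> 0" using elim bpos[of n] by simp
        show ?case unfolding s_def using pois_sum_le1[OF nn fin] by (simp add: abs_of_nonneg sum_nonneg pois_nonneg[OF nn])
      qed
      show "AE \<gamma> in P. (\<lambda>n. s n \<gamma>) \<longlonglongrightarrow> f \<gamma>"
        using AEpos AEne
      proof eventually_elim
        case (elim \<gamma>)
        have l: "\<And>n. \<gamma> * b n \<ge> 0" using elim bpos by simp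
        have rr: "(\<lambda>n. \<gamma> * b n / c n) \<longlonglongrightarrow> \<gamma> * L"
          using tendsto_mult[OF tendsto_const[of \<gamma>] r] by (simp add: mult.assoc times_divide_eq_right)
        show ?case
        proof (cases "\<gamma> * L < x")
          case True
          thus ?thesis unfolding s_def f_def using pois_conc(2)[OF l c rr True] by simp
        next
          case False
          hence "x < \<gamma> * L" using elim by simp
          thus ?thesis unfolding s_def f_def using pois_conc(1)[OF l c rr] by simp
        qed
      qed
    qed
    have ev: "eventually (\<lambda>n. integral\<^sup>L P (s n) = cdf (K_scaled_law V \<alpha> \<theta> n (c n)) x) sequentially"
      using eventually_ge_at_top[of 1] c[unfolded filterlim_at_top_dense, rule_format, of 0]
    proof eventually_elim
      case (elim n)
      have "cdf (K_scaled_law V \<alpha> \<theta> n (c n)) x = (\<Sum>k\<in>{k. real k \<le> x * c n}. K_prob V \<alpha> \<theta> n k)"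
        by (rule cdf_K_scaled) (use Knn elim in auto)
      also have "\<dots> = (\<Sum>k\<in>{k. real k \<le> x * c n}. \<integral>\<gamma>. pois (\<gamma> * b n) k \<partial>P)"
        using K elim by simp
      also have "\<dots> = integral\<^sup>L P (s n)"
        unfolding s_def by (rule Bochner_Integration.integral_sum[symmetric]) (rule int_pois)
      finally show ?case by simp
    qed
    show "(\<lambda>n. cdf (K_scaled_law V \<alpha> \<theta> n (c n)) x) \<longlonglongrightarrow> cdf T x"
      unfolding cdfT using Lim_transform_eventually[OF lim ev] .
  qed
qed

definition bin :: "nat \<Rightarrow> real \<Rightarrow> nat \<Rightarrow> real" where
  "bin N q k = (if k \<le> N then real (N choose k) * q ^ k * (1 - q) ^ (N - k) else 0)"

lemma bin_nonneg: "0 \<le> q \<Longrightarrow> q \<le> 1 \<Longrightarrow> bin N q k \<ge> 0"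
  by (simp add: bin_def)

lemma bin_sum_all: "(\<Sum>k\<le>N. bin N q k) = 1"
  using binomial_ring[of q "1 - q" N] by (simp add: bin_def)

lemma bin_sum_le:
  assumes "0 \<le> q" "q \<le> 1" "finite A"
  shows "(\<Sum>k\<in>A. bin N q k) \<le> 1"
proof -
  have "(\<Sum>k\<in>A. bin N q k) = (\<Sum>k\<in>A \<inter> {..N}. bin N q k)"
    using assms(3) by (intro sum.mono_neutral_right) (auto simp: bin_def)
  also have "\<dots> \<le> (\<Sum>k\<le>N. bin N q k)"
    using assms by (intro sum_mono2) (auto intro: bin_nonneg)
  finally show ?thesis using bin_sum_all by simp
qed

lemma bb_weak:
  fixes PN :: "nat pmf" and p :: "nat \<Rightarrow> real"
  assumes p01: "\<And>n. 0 \<le> p n" "\<And>n. p n \<le> 1" and p1: "p \<longlonglongrightarrow> 1"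
   and K: "\<And>n k. n \<ge> 1 \<Longrightarrow> K_prob V \<alpha> \<theta> n k = (\<integral>N. bin N (p n) k \<partial>measure_pmf PN)"
  shows "weak_conv_m (\<lambda>n. K_scaled_law V \<alpha> \<theta> n 1) (distr (measure_pmf PN) borel real)"
  unfolding weak_conv_m_def weak_conv_def
proof (intro allI impI)
  fix x :: real
  have fin: "finite {k::nat. real k \<le> y}" for y
    by (rule finite_subset[of _ "{..nat \<lceil>y\<rceil>}"]) (auto, linarith)
  have int_bin: "integrable (measure_pmf PN) (\<lambda>N. bin N (p n) k)" for n k
  proof (rule measure_pmf.integrable_const_bound[where B=1])
    show "AE N in measure_pmf PN. norm (bin N (p n) k) \<le> 1"
      using bin_sum_le[OF p01(1) p01(2), of "{k}" _ n] bin_nonneg[OF p01(1) p01(2)] by simp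
  qed simp
  have Knn: "K_prob V \<alpha> \<theta> n k \<ge> 0" if "n \<ge> 1" for n k
    unfolding K[OF that] by (rule integral_nonneg_AE) (simp add: bin_nonneg p01)
  define s where "s n N = (\<Sum>k\<in>{k. real k \<le> x}. bin N (p n) k)" for n N
  define f :: "nat \<Rightarrow> real" where "f = indicator {N. real N \<le> x}"
  have cdfT: "cdf (distr (measure_pmf PN) borel real) x = integral\<^sup>L (measure_pmf PN) f"
    unfolding cdf_def f_def by (subst measure_distr) (auto simp: vimage_def)
  have lim: "(\<lambda>n. integral\<^sup>L (measure_pmf PN) (s n)) \<longlonglongrightarrow> integral\<^sup>L (measure_pmf PN) f"
  proof (rule integral_dominated_convergence[where w="\<lambda>_. 1"])
    show "f \<in> borel_measurable (measure_pmf PN)" by simp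
    show "s n \<in> borel_measurable (measure_pmf PN)" for n by simp
    show "integrable (measure_pmf PN) (\<lambda>_. 1::real)" by simp
    show "AE N in measure_pmf PN. norm (s n N) \<le> 1" for n
      unfolding s_def using bin_sum_le[OF p01(1) p01(2) fin]
      by (simp add: abs_of_nonneg sum_nonneg bin_nonneg p01)
    show "AE N in measure_pmf PN. (\<lambda>n. s n N) \<longlonglongrightarrow> f N"
    proof (rule AE_I2)
      fix N
      show "(\<lambda>n. s n N) \<longlonglongrightarrow> f N"
      proof (cases "real N \<le> x")
        case True
        have "s n N = 1" for n
        proof -
          have "s n N = (\<Sum>k\<le>N. bin N (p n) k)"
            unfolding s_def using True fin by (intro sum.mono_neutral_right) (auto simp: bin_def)
          thus ?thesis using bin_sum_all by simp
        qed
        thus ?thesis using True by (simp add: f_def)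
      next
        case False
        have "(\<lambda>n. s n N) \<longlonglongrightarrow> 0"
          unfolding s_def
        proof (rule tendsto_null_sum)
          fix k assume "k \<in> {k. real k \<le> x}"
          hence kN: "k < N" using False by simp
          have "(\<lambda>n. real (N choose k) * p n ^ k * (1 - p n) ^ (N - k)) \<longlonglongrightarrow> real (N choose k) * 1 ^ k * (1 - 1) ^ (N - k)"
            by (intro tendsto_intros p1)
          thus "(\<lambda>n. bin N (p n) k) \<longlonglongrightarrow> 0" using kN by (simp add: bin_def zero_power)
        qed
        thus ?thesis using False by (simp add: f_def)
      qed
    qed
  qed
  have ev: "eventually (\<lambda>n. integral\<^sup>L (measure_pmf PN) (s n) = cdf (K_scaled_law V \<alpha> \<theta> n 1) x) sequentially"
    using eventually_ge_at_top[of 1]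
  proof eventually_elim
    case (elim n)
    have "cdf (K_scaled_law V \<alpha> \<theta> n 1) x = (\<Sum>k\<in>{k. real k \<le> x * 1}. K_prob V \<alpha> \<theta> n k)"
      by (rule cdf_K_scaled) (use Knn elim in auto)
    also have "\<dots> = (\<Sum>k\<in>{k. real k \<le> x}. \<integral>N. bin N (p n) k \<partial>measure_pmf PN)"
      using K elim by simp
    also have "\<dots> = integral\<^sup>L (measure_pmf PN) (s n)"
      unfolding s_def by (rule Bochner_Integration.integral_sum[symmetric]) (rule int_bin)
    finally show ?case by simp
  qed
  show "(\<lambda>n. cdf (K_scaled_law V \<alpha> \<theta> n 1) x) \<longlonglongrightarrow> cdf (distr (measure_pmf PN) borel real) x"
    unfolding cdfT using Lim_transform_eventually[OF lim ev] .
qed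

lemma pmf_sums_integral:
  fixes PN :: "nat pmf" and f :: "nat \<Rightarrow> real"
  assumes B: "\<And>N. \<bar>f N\<bar> \<le> B"
  shows "(\<lambda>N. f N * pmf PN N) sums (\<integral>N. f N \<partial>measure_pmf PN)"
proof -
  have int: "integrable (count_space UNIV) (\<lambda>N. pmf PN N * f N)"
  proof (rule Bochner_Integration.integrable_bound[where f="\<lambda>N. B * pmf PN N"])
    show "integrable (count_space UNIV) (\<lambda>N. B * pmf PN N)"
      by (intro integrable_mult_right integrable_pmf)
    show "AE N in count_space UNIV. norm (pmf PN N * f N) \<le> norm (B * pmf PN N)"
    proof (rule AE_I2)
      fix N
      have "\<bar>pmf PN N\<bar> * \<bar>f N\<bar> \<le> \<bar>pmf PN N\<bar> * B" by (intro mult_left_mono B) simp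
      moreover have "B \<ge> 0" using B[of 0] by simp
      ultimately show "norm (pmf PN N * f N) \<le> norm (B * pmf PN N)"
        by (simp add: abs_mult mult.commute)
    qed
  qed simp
  have "(\<integral>N. f N \<partial>measure_pmf PN) = (\<integral>N. pmf PN N * f N \<partial>count_space UNIV)"
    unfolding measure_pmf_eq_density by (subst integral_density) auto
  with sums_integral_count_space_nat[OF int] show ?thesis by (simp add: mult.commute)
qed

lemma poch_strict_mono:
  fixes a b :: real
  assumes "0 < a" "a < b"
  shows "pochhammer a (Suc m) < pochhammer b (Suc m)"
proof (induction m)
  case 0 thus ?case using assms by simp
next
  case (Suc m)
  have "pochhammer a (Suc m) * (a + real (Suc m)) < pochhammer b (Suc m) * (b + real (Suc m))"
    using Suc assms pochhammer_pos[of b "Suc m"] by (intro mult_strict_mono) (auto intro: pochhammer_nonneg less_imp_le)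
  thus ?case by (simp only: pochhammer_Suc[of _ "Suc m"])
qed

lemma g_fun_nonneg:
  assumes "\<theta> + \<alpha> > 0" "\<theta> + 1 > 0"
  shows "g_fun \<theta> \<alpha> n \<ge> 0"
  unfolding g_fun_def using assms by (intro sum_nonneg divide_nonneg_nonneg pochhammer_nonneg) auto

lemma ibp_K:
  assumes t1: "\<theta> + 1 > 0" and V: "\<forall>n\<ge>1. \<forall>k. V n k = (\<integral>\<gamma>. V_IBP \<theta> \<alpha> n k \<gamma> \<partial>P)" and n: "n \<ge> 1"
  shows "K_prob V \<alpha> \<theta> n k = (\<integral>\<gamma>. pois (\<gamma> * g_fun \<theta> \<alpha> n) k \<partial>P)"
proof -
  obtain m where m: "n = Suc m" using n by (cases n) auto
  have Q: "pochhammer (\<theta> + 1) m > 0" using t1 by (simp add: pochhammer_pos)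
  have "K_prob V \<alpha> \<theta> n k = (\<integral>\<gamma>. V_IBP \<theta> \<alpha> n k \<gamma> \<partial>P) * (g_fun \<theta> \<alpha> n * pochhammer (\<theta> + 1) m) ^ k"
    unfolding K_prob_eq using V n Ssum_g[OF t1, of \<alpha> m] m by simp
  also have "\<dots> = (\<integral>\<gamma>. V_IBP \<theta> \<alpha> n k \<gamma> * (g_fun \<theta> \<alpha> n * pochhammer (\<theta> + 1) m) ^ k \<partial>P)"
    by simp
  also have "\<dots> = (\<integral>\<gamma>. pois (\<gamma> * g_fun \<theta> \<alpha> n) k \<partial>P)"
  proof (rule Bochner_Integration.integral_cong[OF refl])
    fix \<gamma>
    show "V_IBP \<theta> \<alpha> n k \<gamma> * (g_fun \<theta> \<alpha> n * pochhammer (\<theta> + 1) m) ^ k = pois (\<gamma> * g_fun \<theta> \<alpha> n) k"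
      unfolding V_IBP_def pois_def m using Q
      by (simp add: power_mult_distrib power_divide field_simps)
  qed
  finally show ?thesis .
qed

lemma bb_K:
  fixes \<alpha> \<theta> :: real
  assumes a0: "\<alpha> < 0" and th: "\<theta> > - \<alpha>"
   and V: "\<forall>n\<ge>1. \<forall>k. V n k = (\<Sum>N. V_BB \<theta> \<alpha> n k N * pmf PN N)" and n: "n \<ge> 1"
  shows "K_prob V \<alpha> \<theta> n k = (\<integral>N. bin N (1 - pochhammer (\<theta> + \<alpha>) n / pochhammer \<theta> n) k \<partial>measure_pmf PN)"
proof -
  have t: "\<theta> > 0" using a0 th by linarith
  have ta: "\<theta> + \<alpha> > 0" using a0 th by linarith
  obtain m where m: "n = Suc m" using n by (cases n) auto
  define T where "T = pochhammer \<theta> n"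
  define Pp where "Pp = pochhammer (\<theta> + \<alpha>) n"
  define S where "S = Ssum \<theta> \<alpha> n"
  define q where "q = 1 - Pp / T"
  have Pp: "Pp > 0" unfolding Pp_def using ta by (simp add: pochhammer_pos)
  have TP: "Pp < T" unfolding Pp_def T_def m using poch_strict_mono[of "\<theta>+\<alpha>" \<theta> m] ta a0 by simp
  have Tp: "T > 0" using Pp TP by simp
  have SI: "- \<alpha> * S = T - Pp" unfolding S_def T_def Pp_def by (rule Ssum_ident)
  have Sp: "S > 0"
  proof -
    have "- \<alpha> * S > 0" using SI TP by simp
    thus ?thesis using a0 mult_nonpos_nonpos[of \<alpha> S] by (cases "S > 0") auto
  qed
  have q01: "0 \<le> q" "q \<le> 1" unfolding q_def using Pp TP Tp by (auto simp: field_simps)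
  have key: "V_BB \<theta> \<alpha> n k N * S ^ k = bin N q k" for N
  proof (cases "k \<le> N")
    case True
    have e1: "(Pp / T) ^ N = (Pp / T) ^ k * (Pp / T) ^ (N - k)"
      using True by (simp add: power_add[symmetric])
    have e2: "(- \<alpha> / Pp) ^ k * S ^ k * (Pp / T) ^ k = ((T - Pp) / T) ^ k"
    proof -
      have "(- \<alpha> / Pp) * S * (Pp / T) = (- \<alpha> * S) / T"
        using Pp by (simp add: divide_simps)
      also have "\<dots> = (T - Pp) / T" by (simp only: SI)
      finally have "(- \<alpha> / Pp) * S * (Pp / T) = (T - Pp) / T" .
      thus ?thesis by (metis power_mult_distrib)
    qed
    have "V_BB \<theta> \<alpha> n k N * S ^ k = real (N choose k) * ((- \<alpha> / Pp) ^ k * S ^ k * (Pp / T) ^ k) * (Pp / T) ^ (N - k)"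
      unfolding V_BB_def Pp_def[symmetric] T_def[symmetric] using True e1 by (simp add: algebra_simps)
    also have "\<dots> = bin N q k"
      unfolding e2 bin_def q_def using True Tp by (simp add: field_simps)
    finally show ?thesis .
  next
    case False thus ?thesis by (simp add: V_BB_def bin_def)
  qed
  have bnd: "\<bar>bin N q k\<bar> \<le> 1" for N
    using bin_sum_le[OF q01, of "{k}" N] bin_nonneg[OF q01, of N k] by simp
  have sums1: "(\<lambda>N. bin N q k * pmf PN N) sums (\<integral>N. bin N q k \<partial>measure_pmf PN)"
    by (rule pmf_sums_integral[OF bnd])
  have eqf: "(\<lambda>N. V_BB \<theta> \<alpha> n k N * pmf PN N) = (\<lambda>N. bin N q k * pmf PN N / S ^ k)"
    using key Sp by (auto simp: field_simps intro!: ext)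
  have sums2: "(\<lambda>N. V_BB \<theta> \<alpha> n k N * pmf PN N) sums ((\<integral>N. bin N q k \<partial>measure_pmf PN) / S ^ k)"
    unfolding eqf by (rule sums_divide[OF sums1])
  have "K_prob V \<alpha> \<theta> n k = (\<Sum>N. V_BB \<theta> \<alpha> n k N * pmf PN N) * S ^ k"
    unfolding K_prob_eq S_def using V n by simp
  also have "\<dots> = (\<integral>N. bin N q k \<partial>measure_pmf PN)"
    using sums_unique[OF sums2, symmetric] Sp by simp
  finally show ?thesis unfolding q_def Pp_def T_def .
qed

theorem proposition2:
  fixes \<alpha> \<theta> :: real and V :: "nat \<Rightarrow> nat \<Rightarrow> real"
    and PN :: "nat pmf" and P\<gamma> :: "real measure"
  assumes "\<alpha> < 1" and "\<theta> > - \<alpha>"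
  shows
   "(\<alpha> < 0 \<and> pmf PN 0 = 0 \<and>
       (\<forall>n\<ge>1. \<forall>k. V n k = (\<Sum>N. V_BB \<theta> \<alpha> n k N * pmf PN N))
     \<longrightarrow> weak_conv_m (\<lambda>n. K_scaled_law V \<alpha> \<theta> n 1) (distr (measure_pmf PN) borel real))
  \<and> (\<alpha> = 0 \<and> prob_space P\<gamma> \<and> sets P\<gamma> = sets borel \<and> emeasure P\<gamma> {0<..} = 1 \<and>
       (\<forall>n\<ge>1. \<forall>k. V n k = (\<integral>\<gamma>. V_IBP \<theta> \<alpha> n k \<gamma> \<partial>P\<gamma>))
     \<longrightarrow> weak_conv_m (\<lambda>n. K_scaled_law V \<alpha> \<theta> n (ln (real n)))
           (distr P\<gamma> borel (\<lambda>\<gamma>. \<gamma> * \<theta>)))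
  \<and> (0 < \<alpha> \<and> prob_space P\<gamma> \<and> sets P\<gamma> = sets borel \<and> emeasure P\<gamma> {0<..} = 1 \<and>
       (\<forall>n\<ge>1. \<forall>k. V n k = (\<integral>\<gamma>. V_IBP \<theta> \<alpha> n k \<gamma> \<partial>P\<gamma>))
     \<longrightarrow> weak_conv_m (\<lambda>n. K_scaled_law V \<alpha> \<theta> n (real n powr \<alpha>))
           (distr P\<gamma> borel (\<lambda>\<gamma>. \<gamma> * Gamma (\<theta> + 1) / (\<alpha> * Gamma (\<theta> + \<alpha>)))))"
proof (intro conjI impI)
  assume h: "\<alpha> < 0 \<and> pmf PN 0 = 0 \<and> (\<forall>n\<ge>1. \<forall>k. V n k = (\<Sum>N. V_BB \<theta> \<alpha> n k N * pmf PN N))"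
  have a0: "\<alpha> < 0" using h by simp
  have t: "\<theta> > 0" using a0 assms(2) by linarith
  have ta: "\<theta> + \<alpha> > 0" using assms(2) by linarith
  define p where "p n = 1 - pochhammer (\<theta> + \<alpha>) n / pochhammer \<theta> n" for n
  have le: "pochhammer (\<theta> + \<alpha>) n \<le> pochhammer \<theta> n" for n
  proof (cases n)
    case 0 thus ?thesis by simp
  next
    case (Suc m) thus ?thesis using poch_strict_mono[of "\<theta>+\<alpha>" \<theta> m] ta a0 by simp
  qed
  have p0: "0 \<le> p n" for n
    unfolding p_def using le[of n] pochhammer_pos[of \<theta> n] t by (simp add: field_simps)
  have p1: "p n \<le> 1" for n
    unfolding p_def using pochhammer_pos[of \<theta> n] pochhammer_pos[of "\<theta>+\<alpha>" n] t ta by simp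
  have pl: "p \<longlonglongrightarrow> 1"
    unfolding p_def using tendsto_diff[OF tendsto_const[of 1] bb_ratio[OF a0 assms(2)]] by simp
  show "weak_conv_m (\<lambda>n. K_scaled_law V \<alpha> \<theta> n 1) (distr (measure_pmf PN) borel real)"
    by (rule bb_weak[OF p0 p1 pl]) (unfold p_def, rule bb_K[OF a0 assms(2)], use h in auto)
next
  assume h: "\<alpha> = 0 \<and> prob_space P\<gamma> \<and> sets P\<gamma> = sets borel \<and> emeasure P\<gamma> {0<..} = 1 \<and>
       (\<forall>n\<ge>1. \<forall>k. V n k = (\<integral>\<gamma>. V_IBP \<theta> \<alpha> n k \<gamma> \<partial>P\<gamma>))"
  have a0: "\<alpha> = 0" using h by simp
  have t: "\<theta> > 0" using a0 assms(2) by linarith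
  show "weak_conv_m (\<lambda>n. K_scaled_law V \<alpha> \<theta> n (ln (real n))) (distr P\<gamma> borel (\<lambda>\<gamma>. \<gamma> * \<theta>))"
  proof (rule ibp_weak[where b="g_fun \<theta> \<alpha>"])
    show "prob_space P\<gamma>" "sets P\<gamma> = sets borel" "emeasure P\<gamma> {0<..} = 1" using h by auto
    show "\<theta> > 0" by (rule t)
    show "filterlim (\<lambda>n. ln (real n)) at_top sequentially" by real_asymp
    show "g_fun \<theta> \<alpha> n \<ge> 0" for n using t a0 by (intro g_fun_nonneg) auto
    show "(\<lambda>n. g_fun \<theta> \<alpha> n / ln (real n)) \<longlonglongrightarrow> \<theta>" using g0_asymp[OF t] a0 by simp
    show "K_prob V \<alpha> \<theta> n k = (\<integral>\<gamma>. pois (\<gamma> * g_fun \<theta> \<alpha> n) k \<partial>P\<gamma>)" if "n \<ge> 1" for n k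
      by (rule ibp_K) (use h t that in auto)
  qed
next
  assume h: "0 < \<alpha> \<and> prob_space P\<gamma> \<and> sets P\<gamma> = sets borel \<and> emeasure P\<gamma> {0<..} = 1 \<and>
       (\<forall>n\<ge>1. \<forall>k. V n k = (\<integral>\<gamma>. V_IBP \<theta> \<alpha> n k \<gamma> \<partial>P\<gamma>))"
  have a0: "\<alpha> > 0" using h by simp
  have t1: "\<theta> + 1 > 0" using assms by linarith
  have ta: "\<theta> + \<alpha> > 0" using assms by linarith
  define G where "G = Gamma (\<theta> + 1) / (\<alpha> * Gamma (\<theta> + \<alpha>))"
  have Gp: "G > 0" unfolding G_def using t1 ta a0 by (simp add: Gamma_real_pos)
  have e: "(\<lambda>\<gamma>. \<gamma> * Gamma (\<theta> + 1) / (\<alpha> * Gamma (\<theta> + \<alpha>))) = (\<lambda>\<gamma>. \<gamma> * G)"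
    unfolding G_def by auto
  show "weak_conv_m (\<lambda>n. K_scaled_law V \<alpha> \<theta> n (real n powr \<alpha>))
           (distr P\<gamma> borel (\<lambda>\<gamma>. \<gamma> * Gamma (\<theta> + 1) / (\<alpha> * Gamma (\<theta> + \<alpha>))))"
    unfolding e
  proof (rule ibp_weak[where b="g_fun \<theta> \<alpha>"])
    show "prob_space P\<gamma>" "sets P\<gamma> = sets borel" "emeasure P\<gamma> {0<..} = 1" using h by auto
    show "G > 0" by (rule Gp)
    show "filterlim (\<lambda>n. real n powr \<alpha>) at_top sequentially" using a0 by real_asymp
    show "g_fun \<theta> \<alpha> n \<ge> 0" for n using t1 ta by (intro g_fun_nonneg) auto
    show "(\<lambda>n. g_fun \<theta> \<alpha> n / real n powr \<alpha>) \<longlonglongrightarrow> G"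
      unfolding G_def by (rule g_pos_asymp[OF a0 assms])
    show "K_prob V \<alpha> \<theta> n k = (\<integral>\<gamma>. pois (\<gamma> * g_fun \<theta> \<alpha> n) k \<partial>P\<gamma>)" if "n \<ge> 1" for n k
      by (rule ibp_K) (use h t1 that in auto)
  qed
qed

end
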